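(* Let $\mathcal C$ be an additive category and $\mathbb E\colon\mathcal C^{\mathrm{op}}\times\mathcal C\to\mathsf{Ab}$ a biadditive functor. Let $\alpha\in\mathbb E(C,A)$ and let $(e_A,e_C)\in\mathrm{End}_{\mathbb E\text{-}\mathrm{Ext}(\mathcal C)}(\alpha)$ be an idempotent. Then $e_A$ and $e_C$ split in $\mathcal C$ if and only if $(e_A,e_C)$ splits in $\mathbb E\text{-}\mathrm{Ext}(\mathcal C)$. In particular, if $\mathcal C$ is idempotent complete then so is $\mathbb E\text{-}\mathrm{Ext}(\mathcal C)$.
   Context: An idempotent $e\colon X\to X$ splits if there are $r\colon X\to Y$, $s\colon Y\to X$ with $sr=e$, $rs=1_Y$; a category is idempotent complete if every idempotent splits. Write $a_*\alpha=\mathbb E(C,a)(\alpha)$ and $c^*\beta=\mathbb E(c,A)(\beta)$. The category of extensions $\mathbb E\text{-}\mathrm{Ext}(\mathcal C)$ has as objects all elements $\alpha\in\mathbb E(C,A)$ for $A,C\in\mathcal C$; a morphism from $\alpha\in\mathbb E(C,A)$ to $\beta\in\mathbb E(D,B)$ is a pair $(a,c)$ of morphisms $a\colon A\to B$, $c\colon C\to D$ in $\mathcal C$ with $a_*\alpha=c^*\beta$; composition is componentwise and the identity of $\alpha$ is $(1_A,1_C)$. (A morphism $(e_A,e_C)\colon\alpha\to\alpha$ is idempotent iff $e_A$ and $e_C$ are idempotents in $\mathcal C$.) *)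

theory Defs
  imports Main
begin

record ('o,'m) addcat =
  Ob  :: "'o set"
  Hom :: "'o \<Rightarrow> 'o \<Rightarrow> 'm set"
  cmp :: "'o \<Rightarrow> 'o \<Rightarrow> 'o \<Rightarrow> 'm \<Rightarrow> 'm \<Rightarrow> 'm"
    (* cmp X Y Z g f = g \<circ> f  for f : X \<rightarrow> Y, g : Y \<rightarrow> Z *)
  idt :: "'o \<Rightarrow> 'm"
  zro :: "'o \<Rightarrow> 'o \<Rightarrow> 'm"
  pls :: "'o \<Rightarrow> 'o \<Rightarrow> 'm \<Rightarrow> 'm \<Rightarrow> 'm"
  ngt :: "'o \<Rightarrow> 'o \<Rightarrow> 'm \<Rightarrow> 'm"

definition ab_grp :: "'a set \<Rightarrow> 'a \<Rightarrow> ('a \<Rightarrow> 'a \<Rightarrow> 'a) \<Rightarrow> ('a \<Rightarrow> 'a) \<Rightarrow> bool" where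
  "ab_grp G z p n \<longleftrightarrow>
     z \<in> G \<and> (\<forall>x\<in>G. \<forall>y\<in>G. p x y \<in> G) \<and> (\<forall>x\<in>G. n x \<in> G) \<and>
     (\<forall>x\<in>G. \<forall>y\<in>G. \<forall>w\<in>G. p (p x y) w = p x (p y w)) \<and>
     (\<forall>x\<in>G. \<forall>y\<in>G. p x y = p y x) \<and>
     (\<forall>x\<in>G. p z x = x) \<and> (\<forall>x\<in>G. p (n x) x = z)"

definition is_category :: "('o,'m,'x) addcat_scheme \<Rightarrow> bool" where
  "is_category K \<longleftrightarrow>
     (\<forall>X\<in>Ob K. idt K X \<in> Hom K X X) \<and>
     (\<forall>X\<in>Ob K. \<forall>Y\<in>Ob K. \<forall>Z\<in>Ob K. \<forall>f\<in>Hom K X Y. \<forall>g\<in>Hom K Y Z.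
        cmp K X Y Z g f \<in> Hom K X Z) \<and>
     (\<forall>W\<in>Ob K. \<forall>X\<in>Ob K. \<forall>Y\<in>Ob K. \<forall>Z\<in>Ob K.
        \<forall>f\<in>Hom K W X. \<forall>g\<in>Hom K X Y. \<forall>h\<in>Hom K Y Z.
        cmp K W Y Z h (cmp K W X Y g f) = cmp K W X Z (cmp K X Y Z h g) f) \<and>
     (\<forall>X\<in>Ob K. \<forall>Y\<in>Ob K. \<forall>f\<in>Hom K X Y.
        cmp K X Y Y (idt K Y) f = f \<and> cmp K X X Y f (idt K X) = f)"

definition is_preadditive :: "('o,'m,'x) addcat_scheme \<Rightarrow> bool" where
  "is_preadditive K \<longleftrightarrow> is_category K \<and>
     (\<forall>X\<in>Ob K. \<forall>Y\<in>Ob K. ab_grp (Hom K X Y) (zro K X Y) (pls K X Y) (ngt K X Y)) \<and>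
     (\<forall>X\<in>Ob K. \<forall>Y\<in>Ob K. \<forall>Z\<in>Ob K. \<forall>f\<in>Hom K X Y. \<forall>f'\<in>Hom K X Y. \<forall>g\<in>Hom K Y Z. \<forall>g'\<in>Hom K Y Z.
        cmp K X Y Z (pls K Y Z g g') f = pls K X Z (cmp K X Y Z g f) (cmp K X Y Z g' f) \<and>
        cmp K X Y Z g (pls K X Y f f') = pls K X Z (cmp K X Y Z g f) (cmp K X Y Z g f'))"

definition is_additive :: "('o,'m,'x) addcat_scheme \<Rightarrow> bool" where
  "is_additive K \<longleftrightarrow> is_preadditive K \<and>
     (\<exists>Z\<in>Ob K. \<forall>X\<in>Ob K. Hom K Z X = {zro K Z X} \<and> Hom K X Z = {zro K X Z}) \<and>
     (\<forall>X\<in>Ob K. \<forall>Y\<in>Ob K. \<exists>P\<in>Ob K. \<exists>i1\<in>Hom K X P. \<exists>i2\<in>Hom K Y P.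
        \<exists>p1\<in>Hom K P X. \<exists>p2\<in>Hom K P Y.
        cmp K X P X p1 i1 = idt K X \<and> cmp K Y P Y p2 i2 = idt K Y \<and>
        cmp K X P Y p2 i1 = zro K X Y \<and> cmp K Y P X p1 i2 = zro K Y X \<and>
        pls K P P (cmp K P X P i1 p1) (cmp K P Y P i2 p2) = idt K P)"

record ('o,'m,'e) bifun =
  Ev   :: "'o \<Rightarrow> 'o \<Rightarrow> 'e set"          (* Ev C A = E(C,A) *)
  ez   :: "'o \<Rightarrow> 'o \<Rightarrow> 'e"
  ep   :: "'o \<Rightarrow> 'o \<Rightarrow> 'e \<Rightarrow> 'e \<Rightarrow> 'e"
  en   :: "'o \<Rightarrow> 'o \<Rightarrow> 'e \<Rightarrow> 'e"
  push :: "'o \<Rightarrow> 'o \<Rightarrow> 'o \<Rightarrow> 'm \<Rightarrow> 'e \<Rightarrow> 'e"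
    (* push C A B a \<alpha> = a_* \<alpha> = E(C,a)(\<alpha>), for a : A \<rightarrow> B, \<alpha> \<in> E(C,A) *)
  pull :: "'o \<Rightarrow> 'o \<Rightarrow> 'o \<Rightarrow> 'm \<Rightarrow> 'e \<Rightarrow> 'e"
    (* pull C D A c \<beta> = c^* \<beta> = E(c,A)(\<beta>), for c : C \<rightarrow> D, \<beta> \<in> E(D,A) *)

definition is_biadditive_functor :: "('o,'m,'x) addcat_scheme \<Rightarrow> ('o,'m,'e,'y) bifun_scheme \<Rightarrow> bool" where
  "is_biadditive_functor K E \<longleftrightarrow>
     (\<forall>C\<in>Ob K. \<forall>A\<in>Ob K. ab_grp (Ev E C A) (ez E C A) (ep E C A) (en E C A)) \<and>
     \<comment> \<open>covariant part a_*\<close>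
     (\<forall>C\<in>Ob K. \<forall>A\<in>Ob K. \<forall>B\<in>Ob K. \<forall>a\<in>Hom K A B. \<forall>x\<in>Ev E C A.
        push E C A B a x \<in> Ev E C B) \<and>
     (\<forall>C\<in>Ob K. \<forall>A\<in>Ob K. \<forall>B\<in>Ob K. \<forall>a\<in>Hom K A B. \<forall>x\<in>Ev E C A. \<forall>y\<in>Ev E C A.
        push E C A B a (ep E C A x y) = ep E C B (push E C A B a x) (push E C A B a y)) \<and>
     (\<forall>C\<in>Ob K. \<forall>A\<in>Ob K. \<forall>x\<in>Ev E C A. push E C A A (idt K A) x = x) \<and>
     (\<forall>C\<in>Ob K. \<forall>A\<in>Ob K. \<forall>B\<in>Ob K. \<forall>B'\<in>Ob K. \<forall>a\<in>Hom K A B. \<forall>b\<in>Hom K B B'. \<forall>x\<in>Ev E C A.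
        push E C A B' (cmp K A B B' b a) x = push E C B B' b (push E C A B a x)) \<and>
     \<comment> \<open>contravariant part c^*\<close>
     (\<forall>C\<in>Ob K. \<forall>D\<in>Ob K. \<forall>A\<in>Ob K. \<forall>c\<in>Hom K C D. \<forall>x\<in>Ev E D A.
        pull E C D A c x \<in> Ev E C A) \<and>
     (\<forall>C\<in>Ob K. \<forall>D\<in>Ob K. \<forall>A\<in>Ob K. \<forall>c\<in>Hom K C D. \<forall>x\<in>Ev E D A. \<forall>y\<in>Ev E D A.
        pull E C D A c (ep E D A x y) = ep E C A (pull E C D A c x) (pull E C D A c y)) \<and>
     (\<forall>C\<in>Ob K. \<forall>A\<in>Ob K. \<forall>x\<in>Ev E C A. pull E C C A (idt K C) x = x) \<and>
     (\<forall>C\<in>Ob K. \<forall>D\<in>Ob K. \<forall>D'\<in>Ob K. \<forall>A\<in>Ob K. \<forall>c\<in>Hom K C D. \<forall>d\<in>Hom K D D'. \<forall>x\<in>Ev E D' A.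
        pull E C D' A (cmp K C D D' d c) x = pull E C D A c (pull E D D' A d x)) \<and>
     \<comment> \<open>bifunctoriality\<close>
     (\<forall>C\<in>Ob K. \<forall>D\<in>Ob K. \<forall>A\<in>Ob K. \<forall>B\<in>Ob K. \<forall>a\<in>Hom K A B. \<forall>c\<in>Hom K C D. \<forall>x\<in>Ev E D A.
        push E C A B a (pull E C D A c x) = pull E C D B c (push E D A B a x)) \<and>
     \<comment> \<open>biadditivity\<close>
     (\<forall>C\<in>Ob K. \<forall>A\<in>Ob K. \<forall>B\<in>Ob K. \<forall>a\<in>Hom K A B. \<forall>a'\<in>Hom K A B. \<forall>x\<in>Ev E C A.
        push E C A B (pls K A B a a') x = ep E C B (push E C A B a x) (push E C A B a' x)) \<and>
     (\<forall>C\<in>Ob K. \<forall>D\<in>Ob K. \<forall>A\<in>Ob K. \<forall>c\<in>Hom K C D. \<forall>c'\<in>Hom K C D. \<forall>x\<in>Ev E D A.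
        pull E C D A (pls K C D c c') x = ep E C A (pull E C D A c x) (pull E C D A c' x))"

definition splits_in :: "('o,'m,'x) addcat_scheme \<Rightarrow> 'o \<Rightarrow> 'm \<Rightarrow> bool" where
  "splits_in K X e \<longleftrightarrow> (\<exists>Y\<in>Ob K. \<exists>r\<in>Hom K X Y. \<exists>s\<in>Hom K Y X.
       cmp K X Y X s r = e \<and> cmp K Y X Y r s = idt K Y)"

definition idem_complete :: "('o,'m,'x) addcat_scheme \<Rightarrow> bool" where
  "idem_complete K \<longleftrightarrow> (\<forall>X\<in>Ob K. \<forall>e\<in>Hom K X X. cmp K X X X e e = e \<longrightarrow> splits_in K X e)"

definition ext_obj :: "('o,'m,'x) addcat_scheme \<Rightarrow> ('o,'m,'e,'y) bifun_scheme \<Rightarrow> 'o \<times> 'o \<times> 'e \<Rightarrow> bool" where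
  "ext_obj K E X \<longleftrightarrow> (case X of (C, A, \<alpha>) \<Rightarrow> C \<in> Ob K \<and> A \<in> Ob K \<and> \<alpha> \<in> Ev E C A)"

definition ext_hom :: "('o,'m,'x) addcat_scheme \<Rightarrow> ('o,'m,'e,'y) bifun_scheme \<Rightarrow>
    'o \<times> 'o \<times> 'e \<Rightarrow> 'o \<times> 'o \<times> 'e \<Rightarrow> 'm \<times> 'm \<Rightarrow> bool" where
  "ext_hom K E X Y f \<longleftrightarrow> (case X of (C, A, \<alpha>) \<Rightarrow> case Y of (D, B, \<beta>) \<Rightarrow> case f of (a, c) \<Rightarrow>
      a \<in> Hom K A B \<and> c \<in> Hom K C D \<and> push E C A B a \<alpha> = pull E C D B c \<beta>)"

definition ext_cmp :: "('o,'m,'x) addcat_scheme \<Rightarrow>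
    'o \<times> 'o \<times> 'e \<Rightarrow> 'o \<times> 'o \<times> 'e \<Rightarrow> 'o \<times> 'o \<times> 'e \<Rightarrow> 'm \<times> 'm \<Rightarrow> 'm \<times> 'm \<Rightarrow> 'm \<times> 'm" where
  "ext_cmp K X Y Z g f = (case X of (C, A, _) \<Rightarrow> case Y of (D, B, _) \<Rightarrow> case Z of (F, G, _) \<Rightarrow>
      (cmp K A B G (fst g) (fst f), cmp K C D F (snd g) (snd f)))"

definition ext_idt :: "('o,'m,'x) addcat_scheme \<Rightarrow> 'o \<times> 'o \<times> 'e \<Rightarrow> 'm \<times> 'm" where
  "ext_idt K X = (case X of (C, A, _) \<Rightarrow> (idt K A, idt K C))"

definition ext_idempotent :: "('o,'m,'x) addcat_scheme \<Rightarrow> ('o,'m,'e,'y) bifun_scheme \<Rightarrow>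
    'o \<times> 'o \<times> 'e \<Rightarrow> 'm \<times> 'm \<Rightarrow> bool" where
  "ext_idempotent K E X e \<longleftrightarrow> ext_hom K E X X e \<and> ext_cmp K X X X e e = e"

definition ext_splits :: "('o,'m,'x) addcat_scheme \<Rightarrow> ('o,'m,'e,'y) bifun_scheme \<Rightarrow>
    'o \<times> 'o \<times> 'e \<Rightarrow> 'm \<times> 'm \<Rightarrow> bool" where
  "ext_splits K E X e \<longleftrightarrow> (\<exists>Y r s. ext_obj K E Y \<and> ext_hom K E X Y r \<and> ext_hom K E Y X s \<and>
      ext_cmp K X Y X s r = e \<and> ext_cmp K Y X Y r s = ext_idt K Y)"

definition ext_idem_complete :: "('o,'m,'x) addcat_scheme \<Rightarrow> ('o,'m,'e,'y) bifun_scheme \<Rightarrow> bool" where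
  "ext_idem_complete K E \<longleftrightarrow>
     (\<forall>X e. ext_obj K E X \<and> ext_idempotent K E X e \<longrightarrow> ext_splits K E X e)"

end

theory Submission
  imports Defs
begin

lemma push_in:
  assumes "is_biadditive_functor K E"
  shows "\<And>C A B a x. C \<in> Ob K \<Longrightarrow> A \<in> Ob K \<Longrightarrow> B \<in> Ob K \<Longrightarrow> a \<in> Hom K A B \<Longrightarrow> x \<in> Ev E C A \<Longrightarrow> push E C A B a x \<in> Ev E C B"
  using assms unfolding is_biadditive_functor_def by (elim conjE) auto

lemma push_cmp:
  assumes "is_biadditive_functor K E"
  shows "\<And>C A B B' a b x. C \<in> Ob K \<Longrightarrow> A \<in> Ob K \<Longrightarrow> B \<in> Ob K \<Longrightarrow> B' \<in> Ob K \<Longrightarrow> a \<in> Hom K A B \<Longrightarrow> b \<in> Hom K B B' \<Longrightarrow> x \<in> Ev E C A \<Longrightarrow>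
        push E C A B' (cmp K A B B' b a) x = push E C B B' b (push E C A B a x)"
  using assms unfolding is_biadditive_functor_def by (elim conjE) auto

lemma pull_in:
  assumes "is_biadditive_functor K E"
  shows "\<And>C D A c x. C \<in> Ob K \<Longrightarrow> D \<in> Ob K \<Longrightarrow> A \<in> Ob K \<Longrightarrow> c \<in> Hom K C D \<Longrightarrow> x \<in> Ev E D A \<Longrightarrow> pull E C D A c x \<in> Ev E C A"
  using assms unfolding is_biadditive_functor_def by (elim conjE) auto

lemma pull_cmp:
  assumes "is_biadditive_functor K E"
  shows "\<And>C D D' A c d x. C \<in> Ob K \<Longrightarrow> D \<in> Ob K \<Longrightarrow> D' \<in> Ob K \<Longrightarrow> A \<in> Ob K \<Longrightarrow> c \<in> Hom K C D \<Longrightarrow> d \<in> Hom K D D' \<Longrightarrow> x \<in> Ev E D' A \<Longrightarrow>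
        pull E C D' A (cmp K C D D' d c) x = pull E C D A c (pull E D D' A d x)"
  using assms unfolding is_biadditive_functor_def by (elim conjE) auto

lemma push_pull:
  assumes "is_biadditive_functor K E"
  shows "\<And>C D A B a c x. C \<in> Ob K \<Longrightarrow> D \<in> Ob K \<Longrightarrow> A \<in> Ob K \<Longrightarrow> B \<in> Ob K \<Longrightarrow> a \<in> Hom K A B \<Longrightarrow> c \<in> Hom K C D \<Longrightarrow> x \<in> Ev E D A \<Longrightarrow>
        push E C A B a (pull E C D A c x) = pull E C D B c (push E D A B a x)"
  using assms unfolding is_biadditive_functor_def by (elim conjE) auto

lemma cmp_in:
  assumes "is_category K"
  shows "\<And>X Y Z f g. X \<in> Ob K \<Longrightarrow> Y \<in> Ob K \<Longrightarrow> Z \<in> Ob K \<Longrightarrow> f \<in> Hom K X Y \<Longrightarrow> g \<in> Hom K Y Z \<Longrightarrow> cmp K X Y Z g f \<in> Hom K X Z"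
  using assms unfolding is_category_def by (elim conjE) auto

lemma cmp_assoc:
  assumes "is_category K"
  shows "\<And>W X Y Z f g h. W \<in> Ob K \<Longrightarrow> X \<in> Ob K \<Longrightarrow> Y \<in> Ob K \<Longrightarrow> Z \<in> Ob K \<Longrightarrow> f \<in> Hom K W X \<Longrightarrow> g \<in> Hom K X Y \<Longrightarrow> h \<in> Hom K Y Z \<Longrightarrow>
        cmp K W Y Z h (cmp K W X Y g f) = cmp K W X Z (cmp K X Y Z h g) f"
  using assms unfolding is_category_def by (elim conjE) auto

lemma cmp_idl:
  assumes "is_category K"
  shows "\<And>X Y f. X \<in> Ob K \<Longrightarrow> Y \<in> Ob K \<Longrightarrow> f \<in> Hom K X Y \<Longrightarrow> cmp K X Y Y (idt K Y) f = f"
  using assms unfolding is_category_def by (elim conjE) auto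

lemma cmp_idr:
  assumes "is_category K"
  shows "\<And>X Y f. X \<in> Ob K \<Longrightarrow> Y \<in> Ob K \<Longrightarrow> f \<in> Hom K X Y \<Longrightarrow> cmp K X X Y f (idt K X) = f"
  using assms unfolding is_category_def by (elim conjE) auto

lemma fwd:
  assumes cat: "is_category K"
    and bf: "is_biadditive_functor K E"
    and C: "C \<in> Ob K" and A: "A \<in> Ob K" and al: "\<alpha> \<in> Ev E C A"
    and idem: "ext_idempotent K E (C, A, \<alpha>) (eA, eC)"
    and sa: "splits_in K A eA" and sc: "splits_in K C eC"
  shows "ext_splits K E (C, A, \<alpha>) (eA, eC)"
proof -
  from sa obtain A' rA sA where A': "A' \<in> Ob K" and rA: "rA \<in> Hom K A A'" and sA: "sA \<in> Hom K A' A"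
    and eA: "cmp K A A' A sA rA = eA" and iA: "cmp K A' A A' rA sA = idt K A'"
    unfolding splits_in_def by blast
  from sc obtain C' rC sC where C': "C' \<in> Ob K" and rC: "rC \<in> Hom K C C'" and sC: "sC \<in> Hom K C' C"
    and eC: "cmp K C C' C sC rC = eC" and iC: "cmp K C' C C' rC sC = idt K C'"
    unfolding splits_in_def by blast
  note bfd = push_in[OF bf] push_cmp[OF bf] pull_in[OF bf] pull_cmp[OF bf] push_pull[OF bf]
  note catd = cmp_in[OF cat] cmp_assoc[OF cat] cmp_idl[OF cat] cmp_idr[OF cat]
  from idem have eAh: "eA \<in> Hom K A A" and eCh: "eC \<in> Hom K C C"
    and ide: "push E C A A eA \<alpha> = pull E C C A eC \<alpha>"
    unfolding ext_idempotent_def ext_hom_def by auto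
  define \<gamma> where "\<gamma> = pull E C' C A sC \<alpha>"
  have g: "\<gamma> \<in> Ev E C' A" unfolding \<gamma>_def using bfd C C' A sC al by blast
  define \<beta> where "\<beta> = push E C' A A' rA \<gamma>"
  have b: "\<beta> \<in> Ev E C' A'" unfolding \<beta>_def using bfd C' A A' rA g by blast
  have rAe: "cmp K A A A' rA eA = rA"
  proof -
    have "cmp K A A A' rA eA = cmp K A A A' rA (cmp K A A' A sA rA)" using eA by simp
    also have "\<dots> = cmp K A A' A' (cmp K A' A A' rA sA) rA"
      using catd A A' rA sA by blast
    also have "\<dots> = rA" using iA catd A A' rA by simp
    finally show ?thesis .
  qed
  have eCs: "cmp K C' C C eC sC = sC"
  proof -
    have "cmp K C' C C eC sC = cmp K C' C C (cmp K C C' C sC rC) sC" using eC by simp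
    also have "\<dots> = cmp K C' C' C sC (cmp K C' C C' rC sC)"
      using catd C C' rC sC by metis
    also have "\<dots> = sC" using iC catd C C' sC by simp
    finally show ?thesis .
  qed
  have h1: "push E C A A' rA \<alpha> = pull E C C' A' rC \<beta>"
  proof -
    have "pull E C C' A' rC \<beta> = push E C A A' rA (pull E C C' A rC \<gamma>)"
      unfolding \<beta>_def using bfd C C' A A' rA rC g by metis
    also have "pull E C C' A rC \<gamma> = pull E C C A (cmp K C C' C sC rC) \<alpha>"
      unfolding \<gamma>_def using bfd C C' A rC sC al by metis
    also have "\<dots> = push E C A A eA \<alpha>" using eC ide by simp
    also have "push E C A A' rA (push E C A A eA \<alpha>) = push E C A A' (cmp K A A A' rA eA) \<alpha>"
      using bfd C A A' rA eAh al by metis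
    finally show ?thesis using rAe by simp
  qed
  have h2: "push E C' A' A sA \<beta> = pull E C' C A sC \<alpha>"
  proof -
    have "push E C' A' A sA \<beta> = push E C' A A (cmp K A A' A sA rA) \<gamma>"
      unfolding \<beta>_def using bfd C' A A' rA sA g by metis
    also have "\<dots> = push E C' A A eA \<gamma>" using eA by simp
    also have "\<dots> = pull E C' C A sC (push E C A A eA \<alpha>)"
      unfolding \<gamma>_def using bfd C C' A sC eAh al by metis
    also have "\<dots> = pull E C' C A sC (pull E C C A eC \<alpha>)" using ide by simp
    also have "\<dots> = pull E C' C A (cmp K C' C C eC sC) \<alpha>"
      using bfd C C' A sC eCh al by metis
    finally show ?thesis using eCs by simp
  qed
  show ?thesis unfolding ext_splits_def
    apply (rule exI[of _ "(C', A', \<beta>)"], rule exI[of _ "(rA, rC)"], rule exI[of _ "(sA, sC)"])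
    using C' A' b rA rC sA sC h1 h2 eA eC iA iC
    by (simp add: ext_obj_def ext_hom_def ext_cmp_def ext_idt_def)
qed

lemma bwd:
  assumes "ext_splits K E (C, A, \<alpha>) (eA, eC)"
  shows "splits_in K A eA \<and> splits_in K C eC"
proof -
  from assms obtain Y r s where "ext_obj K E Y" "ext_hom K E (C, A, \<alpha>) Y r" "ext_hom K E Y (C, A, \<alpha>) s"
    "ext_cmp K (C, A, \<alpha>) Y (C, A, \<alpha>) s r = (eA, eC)" "ext_cmp K Y (C, A, \<alpha>) Y r s = ext_idt K Y"
    unfolding ext_splits_def by blast
  then show ?thesis
    by (cases Y; cases r; cases s)
       (auto simp: splits_in_def ext_obj_def ext_hom_def ext_cmp_def ext_idt_def)
qed

lemma both:
  assumes "is_additive K"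
    and "is_biadditive_functor K E"
    and "C \<in> Ob K" and "A \<in> Ob K" and "\<alpha> \<in> Ev E C A"
    and "ext_idempotent K E (C, A, \<alpha>) (eA, eC)"
  shows "splits_in K A eA \<and> splits_in K C eC \<longleftrightarrow> ext_splits K E (C, A, \<alpha>) (eA, eC)"
proof -
  have "is_category K" using assms(1) unfolding is_additive_def is_preadditive_def by blast
  then show ?thesis using fwd[OF _ assms(2-6)] bwd[of K E C A \<alpha> eA eC] by blast
qed

theorem proposition4p1:
  fixes K :: "('o,'m) addcat" and E :: "('o,'m,'e) bifun"
  assumes "is_additive K"
    and "is_biadditive_functor K E"
    and "C \<in> Ob K" and "A \<in> Ob K" and "\<alpha> \<in> Ev E C A"
    and "ext_idempotent K E (C, A, \<alpha>) (eA, eC)"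
  shows "(splits_in K A eA \<and> splits_in K C eC \<longleftrightarrow> ext_splits K E (C, A, \<alpha>) (eA, eC))
         \<and> (idem_complete K \<longrightarrow> ext_idem_complete K E)"
proof
  show "splits_in K A eA \<and> splits_in K C eC \<longleftrightarrow> ext_splits K E (C, A, \<alpha>) (eA, eC)"
    using both[OF assms] .
  show "idem_complete K \<longrightarrow> ext_idem_complete K E"
  proof
    assume ic: "idem_complete K"
    show "ext_idem_complete K E" unfolding ext_idem_complete_def
    proof (intro allI impI)
      fix X e assume h: "ext_obj K E X \<and> ext_idempotent K E X e"
      obtain C1 A1 a1 where X: "X = (C1, A1, a1)" by (cases X)
      obtain f g where e: "e = (f, g)" by (cases e)
      have ob: "C1 \<in> Ob K" "A1 \<in> Ob K" "a1 \<in> Ev E C1 A1" using h X by (auto simp: ext_obj_def)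
      have id: "ext_idempotent K E (C1, A1, a1) (f, g)" using h X e by simp
      have "f \<in> Hom K A1 A1" "g \<in> Hom K C1 C1" "cmp K A1 A1 A1 f f = f" "cmp K C1 C1 C1 g g = g"
        using id by (auto simp: ext_idempotent_def ext_hom_def ext_cmp_def)
      then have "splits_in K A1 f" "splits_in K C1 g" using ic ob unfolding idem_complete_def by auto
      then show "ext_splits K E X e" using both[OF assms(1,2) ob id] X e by simp
    qed
  qed
qed

end
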